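(* Let $A \in L(H)$, $x \in H$ and $u \in H^{\mathbb{Z}}$. Then the following are equivalent: (i) $\tau u = A u + \delta_{-1}x$ and $\operatorname{spt} u \subseteq \mathbb{Z}_{\geq 0}$; (ii) $u_{n+1} = A u_n$ for all $n \in \mathbb{Z}_{\geq 0}$, $u_0 = x$, and $u_n = 0$ for all $n \in \mathbb{Z}_{<0}$; (iii) $u_n = 0$ for $n < 0$ and $u_n = A^n x$ for $n \geq 0$. Moreover, if $\rho > r(A)$, then (i), (ii), (iii) are also equivalent to each of: (iv) $\tau u = A u + \delta_{-1}x$ and $u \in \ell_{2,\rho}(\mathbb{Z}; H)$; (v) $u = (\tau - A)^{-1} \delta_{-1} x \in \ell_{2,\rho}(\mathbb{Z}; H)$, where $(\tau-A)^{-1}$ denotes the inverse of $\tau - A$ in $L(\ell_{2,\rho}(\mathbb{Z};H))$.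
   Context: $H$ is a separable complex Hilbert space. $\tau$ is the shift $(\tau u)_n = u_{n+1}$ on $H^{\mathbb{Z}}$; $Au = (Au_n)_{n\in\mathbb{Z}}$; $\delta_{-1}x$ is the sequence with entry $x$ at index $-1$ and $0$ elsewhere; $\operatorname{spt} u = \{n : u_n\neq 0\}$. $r(A)$ is the spectral radius of $A$. $\ell_{2,\rho}(\mathbb{Z}; H) = \{u \in H^{\mathbb{Z}} : \sum_{k} |u_k|_H^2 \rho^{-2k} < \infty\}$. *)

theory Defs
  imports "HOL-Analysis.Analysis"
begin

class complex_vector = real_vector +
  fixes scaleC :: "complex \<Rightarrow> 'a \<Rightarrow> 'a"  (infixr \<open>*\<^sub>C\<close> 75)
  assumes scaleC_add_right: "a *\<^sub>C (x + y) = a *\<^sub>C x + a *\<^sub>C y"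
    and scaleC_add_left: "(a + b) *\<^sub>C x = a *\<^sub>C x + b *\<^sub>C x"
    and scaleC_scaleC: "a *\<^sub>C (b *\<^sub>C x) = (a * b) *\<^sub>C x"
    and scaleC_one: "1 *\<^sub>C x = x"
    and scaleR_scaleC: "scaleR r x = complex_of_real r *\<^sub>C x"

class complex_normed_vector = complex_vector + real_normed_vector +
  assumes norm_scaleC: "norm (a *\<^sub>C x) = cmod a * norm x"

class complex_inner = complex_normed_vector +
  fixes cinner :: "'a \<Rightarrow> 'a \<Rightarrow> complex"
  assumes cinner_commute: "cinner x y = cnj (cinner y x)"
    and cinner_add_left: "cinner (x + y) z = cinner x z + cinner y z"
    and cinner_scaleC_left: "cinner (a *\<^sub>C x) y = cnj a * cinner x y"
    and cinner_norm: "cinner x x = complex_of_real ((norm x)\<^sup>2)"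

text \<open>Complex Hilbert space: complete complex inner product space.
  Separability is expressed by the class \<open>second_countable_topology\<close>
  (for metric spaces, separable iff second countable).\<close>

class chilbert_space = complex_inner + complete_space

definition clinear :: "('a::complex_vector \<Rightarrow> 'b::complex_vector) \<Rightarrow> bool" where
  "clinear f \<longleftrightarrow> (\<forall>x y. f (x + y) = f x + f y) \<and> (\<forall>c x. f (c *\<^sub>C x) = c *\<^sub>C f x)"

definition bounded_clinear :: "('a::complex_normed_vector \<Rightarrow> 'b::complex_normed_vector) \<Rightarrow> bool" where
  "bounded_clinear f \<longleftrightarrow> clinear f \<and> (\<exists>K. \<forall>x. norm (f x) \<le> norm x * K)"

definition op_spectrum :: "('a::complex_normed_vector \<Rightarrow> 'a) \<Rightarrow> complex set" where
  "op_spectrum A = {l. \<not> (\<exists>B. bounded_clinear B \<and>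
       (\<forall>x. B (l *\<^sub>C x - A x) = x) \<and> (\<forall>y. l *\<^sub>C B y - A (B y) = y))}"

definition spectral_radius :: "('a::complex_normed_vector \<Rightarrow> 'a) \<Rightarrow> real" where
  "spectral_radius A = Sup (cmod ` op_spectrum A)"

definition shift :: "(int \<Rightarrow> 'a) \<Rightarrow> int \<Rightarrow> 'a" where
  "shift u = (\<lambda>n. u (n + 1))"

definition delta_m1 :: "'a::zero \<Rightarrow> int \<Rightarrow> 'a" where
  "delta_m1 x = (\<lambda>n. if n = -1 then x else 0)"

definition spt :: "(int \<Rightarrow> 'a::zero) \<Rightarrow> int set" where
  "spt u = {n. u n \<noteq> 0}"

definition l2rho :: "real \<Rightarrow> (int \<Rightarrow> 'a::real_normed_vector) set" where
  "l2rho \<rho> = {u. (\<lambda>k. (norm (u k))\<^sup>2 * \<rho> powi (-2 * k)) summable_on UNIV}"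

definition l2rho_norm :: "real \<Rightarrow> (int \<Rightarrow> 'a::real_normed_vector) \<Rightarrow> real" where
  "l2rho_norm \<rho> u = sqrt (\<Sum>\<^sub>\<infinity>k. (norm (u k))\<^sup>2 * \<rho> powi (-2 * k))"

definition is_l2rho_inverse ::
  "real \<Rightarrow> ((int \<Rightarrow> 'a::complex_normed_vector) \<Rightarrow> (int \<Rightarrow> 'a)) \<Rightarrow> ((int \<Rightarrow> 'a) \<Rightarrow> (int \<Rightarrow> 'a)) \<Rightarrow> bool" where
  "is_l2rho_inverse \<rho> R T \<longleftrightarrow>
     (\<forall>v \<in> l2rho \<rho>. R v \<in> l2rho \<rho>) \<and>
     (\<forall>v \<in> l2rho \<rho>. \<forall>w \<in> l2rho \<rho>. R (\<lambda>n. v n + w n) = (\<lambda>n. R v n + R w n)) \<and>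
     (\<forall>v \<in> l2rho \<rho>. \<forall>c. R (\<lambda>n. c *\<^sub>C v n) = (\<lambda>n. c *\<^sub>C R v n)) \<and>
     (\<exists>K. \<forall>v \<in> l2rho \<rho>. l2rho_norm \<rho> (R v) \<le> K * l2rho_norm \<rho> v) \<and>
     (\<forall>v \<in> l2rho \<rho>. T (R v) = v) \<and>
     (\<forall>v \<in> l2rho \<rho>. R (T v) = v)"

end

theory Submission
  imports Defs "HOL-Complex_Analysis.Complex_Analysis"
begin

context chilbert_space begin
subclass banach ..
end

lemma scaleC_zero_right [simp]: "c *\<^sub>C (0::'a::complex_vector) = 0"
  by (metis add_cancel_right_right scaleC_add_right)
lemma scaleC_diff_right: "c *\<^sub>C ((x::'a::complex_vector) - y) = c *\<^sub>C x - c *\<^sub>C y"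
  by (metis add_diff_cancel diff_add_cancel scaleC_add_right)
lemma scaleC_minus_right: "c *\<^sub>C (- (x::'a::complex_vector)) = - (c *\<^sub>C x)"
  by (metis diff_0 scaleC_diff_right scaleC_zero_right)
lemma scaleC_zero_left [simp]: "0 *\<^sub>C (x::'a::complex_vector) = 0"
  by (metis add_cancel_right_right add_0 scaleC_add_left)
lemma scaleC_diff_left: "(a - b) *\<^sub>C (x::'a::complex_vector) = a *\<^sub>C x - b *\<^sub>C x"
  by (metis add_diff_cancel diff_add_cancel scaleC_add_left)
lemma scaleC_of_real: "complex_of_real r *\<^sub>C (x::'a::complex_vector) = r *\<^sub>R x"
  by (simp add: scaleR_scaleC)

lemma bounded_linear_scaleC: "bounded_linear (\<lambda>x::'a::complex_normed_vector. c *\<^sub>C x)"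
proof (rule bounded_linear_intro[where K="cmod c"])
  show "c *\<^sub>C (x + y) = c *\<^sub>C x + c *\<^sub>C y" for x y :: 'a by (rule scaleC_add_right)
  show "c *\<^sub>C (r *\<^sub>R x) = r *\<^sub>R (c *\<^sub>C x)" for r and x :: 'a
    by (simp add: scaleR_scaleC scaleC_scaleC mult.commute)
  show "norm (c *\<^sub>C x) \<le> norm x * cmod c" for x :: 'a by (simp add: norm_scaleC mult.commute)
qed

lemma bclin_bl: assumes "bounded_clinear A" shows "bounded_linear A"
proof -
  from assms have cl: "clinear A" and b: "\<exists>K. \<forall>x. norm (A x) \<le> norm x * K"
    by (auto simp: bounded_clinear_def)
  from b obtain K where K: "\<And>x. norm (A x) \<le> norm x * K" by blast
  show ?thesis
  proof (rule bounded_linear_intro[where K=K])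
    show "A (x + y) = A x + A y" for x y using cl by (simp add: clinear_def)
    show "A (r *\<^sub>R x) = r *\<^sub>R A x" for r x using cl by (simp add: clinear_def scaleR_scaleC)
    show "norm (A x) \<le> norm x * K" for x by (rule K)
  qed
qed

lemma bclin_scaleC: "bounded_clinear A \<Longrightarrow> A (c *\<^sub>C x) = c *\<^sub>C A x"
  by (simp add: bounded_clinear_def clinear_def)

lemma cinner_add_right: "cinner x (y + z) = cinner x y + cinner x (z::'a::complex_inner)"
  by (metis cinner_add_left cinner_commute complex_cnj_add)
lemma cinner_scaleC_right: "cinner x (c *\<^sub>C y) = c * cinner x (y::'a::complex_inner)"
  by (metis cinner_commute cinner_scaleC_left complex_cnj_cnj complex_cnj_mult)
lemma cinner_zero_right [simp]: "cinner x (0::'a::complex_inner) = 0"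
  by (metis add_cancel_right_right cinner_add_right)
lemma cinner_zero_left [simp]: "cinner (0::'a::complex_inner) x = 0"
  by (metis add_cancel_right_right cinner_add_left)
lemma cinner_diff_right: "cinner x (y - z) = cinner x y - cinner x (z::'a::complex_inner)"
  by (metis add_diff_cancel diff_add_cancel cinner_add_right)
lemma cinner_diff_left: "cinner (y - z) x = cinner y x - cinner z (x::'a::complex_inner)"
  by (metis add_diff_cancel diff_add_cancel cinner_add_left)

lemma cinner_cs: "cmod (cinner x y) \<le> norm x * norm (y::'a::complex_inner)"
proof (cases "x = 0")
  case True then show ?thesis by simp
next
  case False
  define N where "N = (norm x)\<^sup>2"
  define a where "a = cinner x y"
  define t where "t = a / complex_of_real N"
  have N: "N > 0" using False by (simp add: N_def)
  have e1: "cinner (y - t *\<^sub>C x) (y - t *\<^sub>C x) =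
     cinner y y - t * cinner y x - cnj t * cinner x y + cnj t * t * cinner x x"
    by (simp add: cinner_diff_left cinner_diff_right cinner_scaleC_left cinner_scaleC_right algebra_simps)
  have e2: "cinner y x = cnj a" unfolding a_def by (rule cinner_commute)
  have e3: "cinner x x = complex_of_real N" "cinner y y = complex_of_real ((norm y)\<^sup>2)"
    by (simp_all add: cinner_norm N_def)
  have aa: "a * cnj a = complex_of_real ((cmod a)\<^sup>2)" by (metis complex_norm_square of_real_power)
  have "t * cnj a = complex_of_real ((cmod a)\<^sup>2 / N)" unfolding t_def using aa by simp
  moreover have "cnj t * a = complex_of_real ((cmod a)\<^sup>2 / N)" unfolding t_def using aa
    by (simp add: mult.commute)
  moreover have "cnj t * t * complex_of_real N = complex_of_real ((cmod a)\<^sup>2 / N)"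
    unfolding t_def using aa N by (simp add: field_simps mult.commute)
  ultimately have "cinner (y - t *\<^sub>C x) (y - t *\<^sub>C x) =
      complex_of_real ((norm y)\<^sup>2 - (cmod a)\<^sup>2 / N)"
    using e1 e2 e3 a_def by simp
  then have "(norm (y - t *\<^sub>C x))\<^sup>2 = (norm y)\<^sup>2 - (cmod a)\<^sup>2 / N"
    by (metis cinner_norm of_real_eq_iff)
  then have "(cmod a)\<^sup>2 / N \<le> (norm y)\<^sup>2"
    by (metis diff_ge_0_iff_ge zero_le_power2)
  then have "(cmod a)\<^sup>2 \<le> (norm x * norm y)\<^sup>2"
    using N by (simp add: field_simps power_mult_distrib N_def)
  then show ?thesis unfolding a_def
    by (meson mult_nonneg_nonneg norm_ge_zero power2_le_imp_le)
qed

lemma bounded_linear_cinner_right: "bounded_linear (\<lambda>z. cinner y (z::'a::complex_inner))"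
proof (rule bounded_linear_intro[where K="norm y"])
  show "cinner y (a + b) = cinner y a + cinner y b" for a b by (rule cinner_add_right)
  show "cinner y (r *\<^sub>R a) = r *\<^sub>R cinner y a" for r a
    by (simp add: scaleR_scaleC cinner_scaleC_right scaleR_conv_of_real)
  show "norm (cinner y a) \<le> norm a * norm y" for a using cinner_cs[of y a] by (simp add: mult.commute)
qed

locale bop =
  fixes A :: "'a::chilbert_space \<Rightarrow> 'a"
  assumes bc: "bounded_clinear A"
begin

lemma bl: "bounded_linear A" by (rule bclin_bl[OF bc])
lemma A_scaleC: "A (c *\<^sub>C x) = c *\<^sub>C A x" by (rule bclin_scaleC[OF bc])
lemma A_add: "A (x + y) = A x + A y" by (rule linear_add[OF bounded_linear.linear[OF bl]])
lemma A_diff: "A (x - y) = A x - A y" by (rule linear_diff[OF bounded_linear.linear[OF bl]])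
lemma A_zero [simp]: "A 0 = 0" by (rule linear_0[OF bounded_linear.linear[OF bl]])

definition KA where "KA = (SOME K. K > 0 \<and> (\<forall>x. norm (A x) \<le> norm x * K))"
lemma KA: "KA > 0" "norm (A x) \<le> norm x * KA"
  using someI_ex[OF bounded_linear.pos_bounded[OF bl]] unfolding KA_def by auto

lemma pow_bl: "bounded_linear (A^^n)"
proof (induction n)
  case 0 then show ?case by (simp add: id_def bounded_linear_ident)
next
  case (Suc n) then show ?case
    using bounded_linear_compose[OF bl Suc] by (simp add: o_def)
qed

lemma pow_scaleC: "(A^^n) (c *\<^sub>C x) = c *\<^sub>C (A^^n) x"
  by (induction n) (auto simp: A_scaleC)
lemma pow_add: "(A^^n) (x + y) = (A^^n) x + (A^^n) y"
  by (rule linear_add[OF bounded_linear.linear[OF pow_bl]])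
lemma pow_diff: "(A^^n) (x - y) = (A^^n) x - (A^^n) y"
  by (rule linear_diff[OF bounded_linear.linear[OF pow_bl]])
lemma pow_zero [simp]: "(A^^n) 0 = 0"
  by (rule linear_0[OF bounded_linear.linear[OF pow_bl]])
lemma pow_comm: "(A^^n) (A x) = A ((A^^n) x)"
  by (metis funpow_swap1)
lemma pow_bound: "norm ((A^^n) x) \<le> KA^n * norm x"
proof (induction n)
  case 0 then show ?case by simp
next
  case (Suc n)
  have "norm ((A^^Suc n) x) = norm (A ((A^^n) x))" by simp
  also have "\<dots> \<le> norm ((A^^n) x) * KA" by (rule KA(2))
  also have "\<dots> \<le> KA^n * norm x * KA" using Suc KA(1) by (simp add: mult_right_mono)
  finally show ?case by (simp add: algebra_simps)
qed

definition neu :: "complex \<Rightarrow> 'a \<Rightarrow> 'a" where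
  "neu w x = (\<Sum>n. (w^n) *\<^sub>C (A^^n) x)"

lemma neu_term_bound: "norm ((w^n) *\<^sub>C (A^^n) x) \<le> (cmod w * KA)^n * norm x"
proof -
  have "norm ((w^n) *\<^sub>C (A^^n) x) = cmod w ^ n * norm ((A^^n) x)"
    by (simp add: norm_scaleC norm_power)
  also have "\<dots> \<le> cmod w ^ n * (KA^n * norm x)"
    by (intro mult_left_mono pow_bound) auto
  finally show ?thesis by (simp add: power_mult_distrib algebra_simps)
qed

lemma neu_summable_norm: assumes "cmod w * KA < 1"
  shows "summable (\<lambda>n. norm ((w^n) *\<^sub>C (A^^n) x))"
proof (rule summable_comparison_test')
  show "summable (\<lambda>n. (cmod w * KA)^n * norm x)"
    using assms KA(1) by (intro summable_mult2 summable_geometric) auto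
  show "norm (norm ((w^n) *\<^sub>C (A^^n) x)) \<le> (cmod w * KA)^n * norm x" for n
    using neu_term_bound by simp
qed

lemma neu_summable: assumes "cmod w * KA < 1"
  shows "summable (\<lambda>n. (w^n) *\<^sub>C (A^^n) x)"
  using summable_norm_cancel[OF neu_summable_norm[OF assms]] .

lemma neu_bound: assumes "cmod w * KA < 1"
  shows "norm (neu w x) \<le> norm x / (1 - cmod w * KA)"
proof -
  have g: "summable (\<lambda>n. (cmod w * KA)^n * norm x)"
    using assms KA(1) by (intro summable_mult2 summable_geometric) auto
  have "norm (neu w x) \<le> (\<Sum>n. norm ((w^n) *\<^sub>C (A^^n) x))"
    unfolding neu_def by (rule summable_norm[OF neu_summable_norm[OF assms]])
  also have "\<dots> \<le> (\<Sum>n. (cmod w * KA)^n * norm x)"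
    by (rule suminf_le[OF _ neu_summable_norm[OF assms] g]) (rule neu_term_bound)
  also have "\<dots> = norm x / (1 - cmod w * KA)"
    using assms KA(1) by (simp add: suminf_mult2[symmetric] suminf_geometric)
  finally show ?thesis .
qed

lemma neu_add: assumes "cmod w * KA < 1" shows "neu w (x + y) = neu w x + neu w y"
  unfolding neu_def
  by (simp add: pow_add scaleC_add_right suminf_add[OF neu_summable[OF assms] neu_summable[OF assms]])

lemma neu_scaleC: assumes "cmod w * KA < 1" shows "neu w (c *\<^sub>C x) = c *\<^sub>C neu w x"
  unfolding neu_def
  by (simp add: pow_scaleC bounded_linear.suminf[OF bounded_linear_scaleC neu_summable[OF assms]]
        scaleC_scaleC mult.commute)

lemma neu_shift: assumes "cmod w * KA < 1"
  shows "w *\<^sub>C A (neu w x) = neu w x - x"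
proof -
  have s: "summable (\<lambda>n. (w^n) *\<^sub>C (A^^n) x)" by (rule neu_summable[OF assms])
  have "A (neu w x) = (\<Sum>n. A ((w^n) *\<^sub>C (A^^n) x))"
    unfolding neu_def by (rule bounded_linear.suminf[OF bl s])
  then have "w *\<^sub>C A (neu w x) = (\<Sum>n. w *\<^sub>C A ((w^n) *\<^sub>C (A^^n) x))"
    using bounded_linear.suminf[OF bounded_linear_scaleC[of w] bounded_linear.summable[OF bl s]]
    by simp
  also have "\<dots> = (\<Sum>n. (w^Suc n) *\<^sub>C (A^^Suc n) x)"
    by (simp add: A_scaleC scaleC_scaleC)
  also have "\<dots> = neu w x - x"
    unfolding neu_def using suminf_split_head[OF s] by (simp add: scaleC_one)
  finally show ?thesis .
qed

lemma neu_right: assumes "cmod w * KA < 1"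
  shows "neu w x - w *\<^sub>C A (neu w x) = x"
  using neu_shift[OF assms] by simp

lemma neu_left: assumes "cmod w * KA < 1"
  shows "neu w (x - w *\<^sub>C A x) = x"
proof -
  have "neu w (w *\<^sub>C A x) = w *\<^sub>C A (neu w x)"
    unfolding neu_def
    using bounded_linear.suminf[OF bl neu_summable[OF assms, of x]]
      bounded_linear.suminf[OF bounded_linear_scaleC[of w] bounded_linear.summable[OF bl neu_summable[OF assms, of x]]]
    by (simp add: pow_scaleC pow_comm A_scaleC scaleC_scaleC mult.commute)
  moreover have "neu w (x - w *\<^sub>C A x) = neu w x - neu w (w *\<^sub>C A x)"
    unfolding neu_def
    by (simp add: pow_diff scaleC_diff_right suminf_diff[OF neu_summable[OF assms] neu_summable[OF assms]])
  ultimately show ?thesis using neu_shift[OF assms] by simp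
qed

lemma neu_bclin: assumes "cmod w * KA < 1" shows "bounded_clinear (neu w)"
  unfolding bounded_clinear_def clinear_def
proof (intro conjI allI)
  show "neu w (x + y) = neu w x + neu w y" for x y by (rule neu_add[OF assms])
  show "neu w (c *\<^sub>C x) = c *\<^sub>C neu w x" for c x by (rule neu_scaleC[OF assms])
  show "\<exists>K. \<forall>x. norm (neu w x) \<le> norm x * K"
    using neu_bound[OF assms] by (intro exI[of _ "1 / (1 - cmod w * KA)"]) simp
qed

definition invop :: "complex \<Rightarrow> ('a \<Rightarrow> 'a) \<Rightarrow> bool" where
  "invop w S \<longleftrightarrow> bounded_clinear S \<and> (\<forall>x. S (x - w *\<^sub>C A x) = x) \<and> (\<forall>y. S y - w *\<^sub>C A (S y) = y)"

lemma bclin_compose: "bounded_clinear f \<Longrightarrow> bounded_clinear g \<Longrightarrow> bounded_clinear (\<lambda>x. f (g x))"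
proof -
  assume f: "bounded_clinear f" and g: "bounded_clinear g"
  obtain Kf where Kf: "\<And>x. norm (f x) \<le> norm x * Kf" and Kf0: "Kf \<ge> 0"
    using bounded_linear.nonneg_bounded[OF bclin_bl[OF f]] by auto
  obtain Kg where Kg: "\<And>x. norm (g x) \<le> norm x * Kg" "Kg \<ge> 0"
    using bounded_linear.nonneg_bounded[OF bclin_bl[OF g]] by auto
  show ?thesis unfolding bounded_clinear_def clinear_def
  proof (intro conjI allI exI)
    show "f (g (x + y)) = f (g x) + f (g y)" for x y
      using f g by (simp add: bounded_clinear_def clinear_def)
    show "f (g (c *\<^sub>C x)) = c *\<^sub>C f (g x)" for c x
      using f g by (simp add: bounded_clinear_def clinear_def)
    show "norm (f (g x)) \<le> norm x * (Kg * Kf)" for x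
      proof -
      have "norm (f (g x)) \<le> norm (g x) * Kf" by (rule Kf)
      also have "\<dots> \<le> norm x * Kg * Kf" by (rule mult_right_mono[OF Kg(1) Kf0])
      finally show ?thesis by (simp add: mult.assoc)
    qed
  qed
qed

lemma spec_le_KA: assumes "l \<in> op_spectrum A" shows "cmod l \<le> KA"
proof (rule ccontr)
  assume "\<not> cmod l \<le> KA"
  then have gt: "cmod l > KA" by simp
  then have l0: "l \<noteq> 0" using KA(1) by auto
  define w where "w = 1 / l"
  have wl: "w * l = 1" "l * w = 1" using l0 by (simp_all add: w_def)
  have q: "cmod w * KA < 1" using gt KA(1) l0 by (simp add: w_def norm_divide field_simps)
  define B where "B = (\<lambda>y. w *\<^sub>C neu w y)"
  have bB: "bounded_clinear B"
    unfolding B_def by (rule bclin_compose[OF _ neu_bclin[OF q], of "\<lambda>y. w *\<^sub>C y"])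
      (auto simp: bounded_clinear_def clinear_def scaleC_add_right scaleC_scaleC mult.commute norm_scaleC
            intro!: exI[of _ "cmod w"])
  have "B (l *\<^sub>C x - A x) = x" for x
  proof -
    have "l *\<^sub>C x - A x = l *\<^sub>C (x - w *\<^sub>C A x)"
      by (simp add: scaleC_diff_right scaleC_scaleC wl scaleC_one)
    then show ?thesis
      by (simp add: B_def neu_scaleC[OF q] neu_left[OF q] scaleC_scaleC wl scaleC_one)
  qed
  moreover have "l *\<^sub>C B y - A (B y) = y" for y
    using neu_right[OF q, of y] by (simp add: B_def A_scaleC scaleC_scaleC wl scaleC_one)
  ultimately show False using assms bB unfolding op_spectrum_def by blast
qed

lemma spec_bdd: "bdd_above (cmod ` op_spectrum A)"
  using spec_le_KA by (auto intro!: bdd_aboveI[of _ KA])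

lemma spec_le_r: "l \<in> op_spectrum A \<Longrightarrow> cmod l \<le> spectral_radius A"
  unfolding spectral_radius_def by (rule cSup_upper[OF _ spec_bdd]) auto

lemma invop_exists: assumes "s1 > 0" "s1 \<ge> spectral_radius A" "cmod w < 1 / s1"
  shows "\<exists>S. invop w S"
proof (cases "w = 0")
  case True
  have "invop w (\<lambda>x. x)" unfolding invop_def True
    by (auto simp: bounded_clinear_def clinear_def intro!: exI[of _ 1])
  then show ?thesis by blast
next
  case False
  define l where "l = 1 / w"
  have wl: "w * l = 1" "l * w = 1" using False by (simp_all add: l_def)
  have "cmod l > s1" using assms False by (simp add: l_def norm_divide field_simps)
  then have "l \<notin> op_spectrum A" using spec_le_r assms(2) by force
  then obtain B where bB: "bounded_clinear B" and B1: "\<And>x. B (l *\<^sub>C x - A x) = x"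
    and B2: "\<And>y. l *\<^sub>C B y - A (B y) = y"
    unfolding op_spectrum_def by blast
  define S where "S = (\<lambda>y. l *\<^sub>C B y)"
  have "bounded_clinear S"
    unfolding S_def by (rule bclin_compose[OF _ bB, of "\<lambda>y. l *\<^sub>C y"])
      (auto simp: bounded_clinear_def clinear_def scaleC_add_right scaleC_scaleC mult.commute norm_scaleC
            intro!: exI[of _ "cmod l"])
  moreover have "S (x - w *\<^sub>C A x) = x" for x
  proof -
    have "x - w *\<^sub>C A x = w *\<^sub>C (l *\<^sub>C x - A x)"
      by (simp add: scaleC_diff_right scaleC_scaleC wl scaleC_one)
    then show ?thesis using bB B1
      by (simp add: S_def bclin_scaleC scaleC_scaleC wl scaleC_one)
  qed
  moreover have "S y - w *\<^sub>C A (S y) = y" for y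
    using B2[of y] by (simp add: S_def A_scaleC scaleC_scaleC wl scaleC_one)
  ultimately show ?thesis unfolding invop_def by blast
qed

lemma invop_bl: "invop w S \<Longrightarrow> bounded_linear S"
  unfolding invop_def by (auto intro: bclin_bl)

lemma invop_add: "invop w S \<Longrightarrow> S (x + y) = S x + S y"
  by (rule linear_add[OF bounded_linear.linear[OF invop_bl]])
lemma invop_diff: "invop w S \<Longrightarrow> S (x - y) = S x - S y"
  by (rule linear_diff[OF bounded_linear.linear[OF invop_bl]])
lemma invop_zero: "invop w S \<Longrightarrow> S 0 = 0"
  by (rule linear_0[OF bounded_linear.linear[OF invop_bl]])
lemma invop_scaleC: "invop w S \<Longrightarrow> S (c *\<^sub>C x) = c *\<^sub>C S x"
  unfolding invop_def by (auto intro: bclin_scaleC)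

lemma invop_resolvent: assumes "invop w S" "invop w0 S0"
  shows "S y = S0 y + (w - w0) *\<^sub>C S0 (A (S y))"
proof -
  have "S y - w0 *\<^sub>C A (S y) = y + (w - w0) *\<^sub>C A (S y)"
  proof -
    have "S y - w *\<^sub>C A (S y) = y" using assms(1) unfolding invop_def by blast
    moreover have "(w - w0) *\<^sub>C A (S y) = w *\<^sub>C A (S y) - w0 *\<^sub>C A (S y)" by (rule scaleC_diff_left)
    ultimately show ?thesis by (simp add: algebra_simps)
  qed
  then have "S0 (S y - w0 *\<^sub>C A (S y)) = S0 y + (w - w0) *\<^sub>C S0 (A (S y))"
    using assms(2) by (simp add: invop_add invop_scaleC)
  moreover have "S0 (S y - w0 *\<^sub>C A (S y)) = S y" using assms(2) unfolding invop_def by blast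
  ultimately show ?thesis by simp
qed

lemma invop_local_bound:
  assumes "invop w S" "invop w0 S0" "\<And>z. norm (S0 z) \<le> K0 * norm z"
    and "cmod (w - w0) * K0 * KA \<le> 1/2" and "K0 \<ge> 0"
  shows "norm (S y) \<le> 2 * K0 * norm y"
proof -
  have "norm (S y) \<le> norm (S0 y) + norm ((w - w0) *\<^sub>C S0 (A (S y)))"
    using invop_resolvent[OF assms(1,2), of y] by (metis norm_triangle_ineq)
  also have "norm ((w - w0) *\<^sub>C S0 (A (S y))) \<le> cmod (w - w0) * (K0 * (norm (S y) * KA))"
  proof -
    have "norm (S0 (A (S y))) \<le> K0 * norm (A (S y))" by (rule assms(3))
    also have "\<dots> \<le> K0 * (norm (S y) * KA)"
      using KA(2) assms(5) by (rule mult_left_mono)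
    finally show ?thesis by (simp add: norm_scaleC mult_left_mono)
  qed
  finally have "norm (S y) \<le> K0 * norm y + (cmod (w - w0) * K0 * KA) * norm (S y)"
    using assms(3)[of y] by (simp add: algebra_simps)
  also have "\<dots> \<le> K0 * norm y + 1/2 * norm (S y)"
    using assms(4) by (intro add_left_mono mult_right_mono) auto
  finally show ?thesis by simp
qed

end

locale bop_r = bop +
  fixes s1 :: real
  assumes s1: "s1 > 0" "s1 \<ge> spectral_radius A"
begin

abbreviation "D \<equiv> ball (0::complex) (1 / s1)"

definition Sop :: "complex \<Rightarrow> 'a \<Rightarrow> 'a" where "Sop w = (SOME S. invop w S)"

lemma Sop: "w \<in> D \<Longrightarrow> invop w (Sop w)"
  unfolding Sop_def using invop_exists[OF s1(1) s1(2), of w] by (simp add: someI_ex)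

definition K0 :: "complex \<Rightarrow> real" where
  "K0 w = (SOME K. K > 0 \<and> (\<forall>z. norm (Sop w z) \<le> norm z * K))"

lemma K0: assumes "w \<in> D" shows "K0 w > 0" "norm (Sop w z) \<le> K0 w * norm z"
proof -
  have "\<exists>K>0. \<forall>z. norm (Sop w z) \<le> norm z * K"
    by (rule bounded_linear.pos_bounded[OF invop_bl[OF Sop[OF assms]]])
  then have "K0 w > 0 \<and> (\<forall>z. norm (Sop w z) \<le> norm z * K0 w)"
    unfolding K0_def by (rule someI_ex[where P="\<lambda>K. K > 0 \<and> (\<forall>z. norm (Sop w z) \<le> norm z * K)"])
  then show "K0 w > 0" "norm (Sop w z) \<le> K0 w * norm z" by (auto simp: mult.commute)
qed

definition del :: "complex \<Rightarrow> real" where "del w = 1 / (2 * K0 w * KA)"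

lemma del_pos: "w \<in> D \<Longrightarrow> del w > 0"
  using K0(1) KA(1) by (simp add: del_def)

lemma local_bound: assumes "w0 \<in> D" "w \<in> D" "cmod (w - w0) < del w0"
  shows "norm (Sop w y) \<le> 2 * K0 w0 * norm y"
proof (rule invop_local_bound[OF Sop[OF assms(2)] Sop[OF assms(1)] K0(2)[OF assms(1)]])
  show "cmod (w - w0) * K0 w0 * KA \<le> 1/2"
    using assms(3) K0(1)[OF assms(1)] KA(1) by (simp add: del_def field_simps)
  show "K0 w0 \<ge> 0" using K0(1)[OF assms(1)] by simp
qed

lemma cont_bound: assumes "w0 \<in> D" "w \<in> D" "cmod (w - w0) < del w0"
  shows "norm (Sop w y - Sop w0 y) \<le> cmod (w - w0) * (K0 w0 * KA * (2 * K0 w0 * norm y))"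
proof -
  have "Sop w y - Sop w0 y = (w - w0) *\<^sub>C Sop w0 (A (Sop w y))"
    using invop_resolvent[OF Sop[OF assms(2)] Sop[OF assms(1)], of y] by (metis add_diff_cancel_left')
  then have "norm (Sop w y - Sop w0 y) = cmod (w - w0) * norm (Sop w0 (A (Sop w y)))"
    by (simp add: norm_scaleC)
  also have "norm (Sop w0 (A (Sop w y))) \<le> K0 w0 * KA * (2 * K0 w0 * norm y)"
  proof -
    have "norm (Sop w0 (A (Sop w y))) \<le> K0 w0 * norm (A (Sop w y))" by (rule K0(2)[OF assms(1)])
    also have "\<dots> \<le> K0 w0 * (norm (Sop w y) * KA)"
      using KA(2) K0(1)[OF assms(1)] by (intro mult_left_mono) auto
    also have "\<dots> \<le> K0 w0 * ((2 * K0 w0 * norm y) * KA)"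
      using local_bound[OF assms] K0(1)[OF assms(1)] KA(1) by (intro mult_left_mono mult_right_mono) auto
    finally show ?thesis by (simp add: algebra_simps)
  qed
  then have "cmod (w - w0) * norm (Sop w0 (A (Sop w y))) \<le> cmod (w - w0) * (K0 w0 * KA * (2 * K0 w0 * norm y))"
    by (intro mult_left_mono) auto
  finally show ?thesis .
qed

lemma Sop_tendsto: assumes "w0 \<in> D" shows "((\<lambda>w. Sop w x) \<longlongrightarrow> Sop w0 x) (at w0)"
proof (rule LIM_zero_cancel, rule Lim_null_comparison)
  define C where "C = K0 w0 * KA * (2 * K0 w0 * norm x)"
  define d where "d = min (del w0) (1 / s1 - cmod w0)"
  have d: "d > 0" using del_pos[OF assms] assms by (auto simp: d_def)
  show "\<forall>\<^sub>F w in at w0. norm (Sop w x - Sop w0 x) \<le> cmod (w - w0) * C"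
    unfolding eventually_at
  proof (intro exI[of _ d] conjI ballI impI d)
    fix w assume "w \<in> UNIV" "w \<noteq> w0 \<and> dist w w0 < d"
    then have dd: "cmod (w - w0) < d" by (simp add: dist_norm)
    have "w \<in> D" using dd norm_triangle_ineq2[of w w0] by (simp add: d_def)
    moreover have "cmod (w - w0) < del w0" using dd by (simp add: d_def)
    ultimately show "norm (Sop w x - Sop w0 x) \<le> cmod (w - w0) * C"
      unfolding C_def by (rule cont_bound[OF assms])
  qed
  have "((\<lambda>w. w - w0) \<longlongrightarrow> 0) (at w0)" by (rule LIM_zero[OF tendsto_ident_at])
  then have "((\<lambda>w. cmod (w - w0)) \<longlongrightarrow> 0) (at w0)" by (rule tendsto_norm_zero)
  then show "((\<lambda>w. cmod (w - w0) * C) \<longlongrightarrow> 0) (at w0)" by (rule tendsto_mult_left_zero)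
qed

lemma phi_deriv: assumes "w0 \<in> D"
  shows "((\<lambda>w. cinner y (Sop w x)) has_field_derivative cinner y (Sop w0 (A (Sop w0 x)))) (at w0)"
  unfolding has_field_derivative_iff
proof (rule Lim_transform_eventually)
  have blg: "bounded_linear (\<lambda>z. cinner y (Sop w0 (A z)))"
    by (intro bounded_linear_compose[OF bounded_linear_cinner_right]
          bounded_linear_compose[OF invop_bl[OF Sop[OF assms]] bl])
  show "((\<lambda>w. cinner y (Sop w0 (A (Sop w x)))) \<longlongrightarrow> cinner y (Sop w0 (A (Sop w0 x)))) (at w0)"
    by (rule bounded_linear.tendsto[OF blg Sop_tendsto[OF assms]])
  have "open D" by simp
  then have "\<forall>\<^sub>F w in at w0. w \<in> D \<and> w \<noteq> w0"
    using assms by (intro eventually_conj eventually_at_in_open' eventually_neq_at_within) auto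
  then show "\<forall>\<^sub>F w in at w0. cinner y (Sop w0 (A (Sop w x))) =
        (cinner y (Sop w x) - cinner y (Sop w0 x)) / (w - w0)"
  proof (rule eventually_mono)
    fix w assume w: "w \<in> D \<and> w \<noteq> w0"
    have "Sop w x - Sop w0 x = (w - w0) *\<^sub>C Sop w0 (A (Sop w x))"
      using invop_resolvent[OF Sop Sop[OF assms], of w x] w by (metis add_diff_cancel_left')
    then have "cinner y (Sop w x) - cinner y (Sop w0 x) = (w - w0) * cinner y (Sop w0 (A (Sop w x)))"
      by (metis cinner_diff_right cinner_scaleC_right)
    then show "cinner y (Sop w0 (A (Sop w x))) = (cinner y (Sop w x) - cinner y (Sop w0 x)) / (w - w0)"
      using w by simp
  qed
qed

lemma phi_holo: "(\<lambda>w. cinner y (Sop w x)) holomorphic_on D"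
  unfolding holomorphic_on_open[OF open_ball] using phi_deriv by blast

end

context bop_r begin

lemma sphere_bound: assumes "r0 > 0" "r0 < 1 / s1"
  shows "\<exists>M\<ge>0. \<forall>w\<in>sphere 0 r0. \<forall>z. norm (Sop w z) \<le> M * norm z"
proof -
  have sub: "sphere 0 r0 \<subseteq> D" using assms by auto
  have "compact (sphere (0::complex) r0)" by simp
  moreover have "\<And>c. c \<in> sphere 0 r0 \<Longrightarrow> open (ball c (del c))" by simp
  moreover have "sphere 0 r0 \<subseteq> (\<Union>c\<in>sphere 0 r0. ball c (del c))"
  proof
    fix x assume x: "x \<in> sphere (0::complex) r0"
    then have "x \<in> ball x (del x)" using del_pos sub by auto
    then show "x \<in> (\<Union>c\<in>sphere 0 r0. ball c (del c))" using x by blast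
  qed
  ultimately obtain T where T: "T \<subseteq> sphere 0 r0" "finite T" "sphere 0 r0 \<subseteq> (\<Union>c\<in>T. ball c (del c))"
    by (rule compactE_image)
  define M where "M = (\<Sum>c\<in>T. 2 * K0 c)"
  have nn: "0 \<le> 2 * K0 c" if c: "c \<in> T" for c
  proof -
    have "c \<in> D" using c T(1) sub by blast
    then have "K0 c > 0" by (rule K0(1))
    then show ?thesis by simp
  qed
  have "M \<ge> 0" unfolding M_def by (rule sum_nonneg) (use nn in auto)
  moreover have "norm (Sop w z) \<le> M * norm z" if w: "w \<in> sphere 0 r0" for w z
  proof -
    obtain c where c: "c \<in> T" "w \<in> ball c (del c)" using T(3) w by blast
    have cD: "c \<in> D" using c T(1) sub by blast
    have "norm (Sop w z) \<le> 2 * K0 c * norm z"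
      by (rule local_bound[OF cD]) (use w sub c in \<open>auto simp: dist_norm norm_minus_commute\<close>)
    also have "\<dots> \<le> M * norm z"
      unfolding M_def by (intro mult_right_mono member_le_sum[OF c(1)]) (use nn T in auto)
    finally show ?thesis .
  qed
  ultimately show ?thesis by blast
qed

lemma coef_bound: assumes "t > s1"
  shows "\<exists>M\<ge>0. \<forall>n x y. cmod (cinner y ((A^^n) x)) \<le> norm y * M * norm x * t^n"
proof -
  define r0 where "r0 = 1 / t"
  have r0: "r0 > 0" "r0 < 1 / s1" using assms s1 by (auto simp: r0_def field_simps)
  obtain M where M: "M \<ge> 0" "\<And>w z. w \<in> sphere 0 r0 \<Longrightarrow> norm (Sop w z) \<le> M * norm z"
    using sphere_bound[OF r0] by blast
  have "cmod (cinner y ((A^^n) x)) \<le> norm y * M * norm x * t^n" for n x y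
  proof -
    define phi where "phi = (\<lambda>w. cinner y (Sop w x))"
    define F where "F = Abs_fps (\<lambda>n. cinner y ((A^^n) x))"
    define e where "e = 1 / (2 * KA)"
    have e: "e > 0" "e * KA = 1/2" using KA(1) by (auto simp: e_def)
    have "fps_conv_radius F \<ge> norm (complex_of_real e)"
      unfolding fps_conv_radius_def
    proof (rule conv_radius_geI, rule summable_comparison_test')
      show "summable (\<lambda>n. norm y * norm x * (1/2)^n)"
        by (intro summable_mult summable_geometric) auto
      fix n
      have "norm (fps_nth F n * complex_of_real e ^ n) = cmod (cinner y ((A^^n) x)) * e^n"
        using e by (simp add: F_def norm_mult norm_power)
      also have "\<dots> \<le> (norm y * (KA^n * norm x)) * e^n"
        using cinner_cs[of y "(A^^n) x"] pow_bound[of n x] e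
        by (intro mult_right_mono order.trans[OF cinner_cs] mult_left_mono) auto
      also have "\<dots> = norm y * norm x * (e * KA)^n" by (simp add: power_mult_distrib)
      finally show "norm (fps_nth F n * complex_of_real e ^ n) \<le> norm y * norm x * (1/2)^n"
        using e by simp
    qed
    then have "ereal e \<le> fps_conv_radius F" using e(1) by simp
    moreover have "(0::ereal) < ereal e" using e(1) by simp
    ultimately have rad: "fps_conv_radius F > 0" by (rule order.strict_trans2[rotated])
    have ev: "\<forall>\<^sub>F z in nhds 0. eval_fps F z = phi z"
      unfolding eventually_nhds_metric
    proof (intro exI[of _ "min e (1 / s1)"] conjI allI impI)
      show "min e (1 / s1) > 0" using e s1 by simp
      fix z :: complex assume "dist z 0 < min e (1 / s1)"
      then have z: "cmod z < e" "cmod z < 1 / s1" by auto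
      have q: "cmod z * KA < 1"
      proof -
        have "cmod z * KA < e * KA" using z(1) KA(1) by (rule mult_strict_right_mono)
        then show ?thesis using e(2) by simp
      qed
      have zD: "z \<in> D" using z by simp
      have "Sop z (neu z x - z *\<^sub>C A (neu z x)) = neu z x"
        using Sop[OF zD] unfolding invop_def by blast
      then have "Sop z x = neu z x" using neu_right[OF q] by simp
      then have "phi z = (\<Sum>n. cinner y ((z^n) *\<^sub>C (A^^n) x))"
        unfolding phi_def neu_def
        by (rule ssubst) (rule bounded_linear.suminf[OF bounded_linear_cinner_right neu_summable[OF q]])
      also have "\<dots> = eval_fps F z"
        by (simp add: eval_fps_def F_def cinner_scaleC_right mult.commute)
      finally show "eval_fps F z = phi z" by simp
    qed
    have exp: "phi has_fps_expansion F" unfolding has_fps_expansion_def using rad ev by blast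
    have c: "cinner y ((A^^n) x) = (deriv ^^ n) phi 0 / fact n"
      using fps_nth_fps_expansion[OF exp, of n] by (simp add: F_def)
    have "norm ((deriv ^^ n) phi 0) \<le> fact n * (norm y * (M * norm x)) / r0^n"
    proof (rule Cauchy_inequality)
      have "ball 0 r0 \<subseteq> D" using r0 by auto
      then show "phi holomorphic_on ball 0 r0" unfolding phi_def by (rule holomorphic_on_subset[OF phi_holo])
      have "cball 0 r0 \<subseteq> D" using r0 by auto
      then show "continuous_on (cball 0 r0) phi" unfolding phi_def
        by (rule continuous_on_subset[OF holomorphic_on_imp_continuous_on[OF phi_holo]])
      show "0 < r0" by (rule r0)
      fix w :: complex assume "norm (0 - w) = r0"
      then have w: "w \<in> sphere 0 r0" by simp
      have "norm (phi w) \<le> norm y * norm (Sop w x)" unfolding phi_def by (rule cinner_cs)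
      also have "\<dots> \<le> norm y * (M * norm x)" by (intro mult_left_mono M(2)[OF w]) auto
      finally show "norm (phi w) \<le> norm y * (M * norm x)" .
    qed
    then have "cmod (cinner y ((A^^n) x)) \<le> (norm y * (M * norm x)) / r0^n"
      unfolding c by (simp add: norm_divide field_simps)
    also have "\<dots> = norm y * M * norm x * t^n" by (simp add: r0_def power_one_over)
    finally show ?thesis .
  qed
  then show ?thesis using M(1) by blast
qed

lemma gelfand: assumes "t > s1"
  shows "\<exists>M\<ge>0. \<forall>n x. norm ((A^^n) x) \<le> M * t^n * norm x"
proof -
  obtain M where M: "M \<ge> 0" "\<And>n x y. cmod (cinner y ((A^^n) x)) \<le> norm y * M * norm x * t^n"
    using coef_bound[OF assms] by blast
  have "norm ((A^^n) x) \<le> M * t^n * norm x" for n x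
  proof (cases "(A^^n) x = 0")
    case True then show ?thesis using M(1) assms s1 by simp
  next
    case False
    define v where "v = (A^^n) x"
    have "cmod (cinner v v) = (norm v)^2" by (simp only: cinner_norm norm_of_real) simp
    then have "(norm v)^2 \<le> norm v * M * norm x * t^n" using M(2)[of v n x] by (simp add: v_def)
    then have "norm v * norm v \<le> norm v * (M * t^n * norm x)" by (simp add: power2_eq_square algebra_simps)
    then show ?thesis using False by (simp add: v_def)
  qed
  then show ?thesis using M(1) by blast
qed

end

lemma series_cs:
  fixes w x :: "nat \<Rightarrow> real"
  assumes w: "\<And>j. w j \<ge> 0" and s1: "summable w" and s2: "summable (\<lambda>j. w j * (x j)^2)"
    and s3: "summable (\<lambda>j. w j * x j)"
  shows "(\<Sum>j. w j * x j)^2 \<le> (\<Sum>j. w j) * (\<Sum>j. w j * (x j)^2)"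
proof (rule LIMSEQ_le)
  show "(\<lambda>N. (\<Sum>j<N. w j * x j)^2) \<longlonglongrightarrow> (\<Sum>j. w j * x j)^2"
    by (intro tendsto_power summable_LIMSEQ s3)
  show "(\<lambda>N. (\<Sum>j<N. w j) * (\<Sum>j<N. w j * (x j)^2)) \<longlonglongrightarrow> (\<Sum>j. w j) * (\<Sum>j. w j * (x j)^2)"
    by (intro tendsto_mult summable_LIMSEQ s1 s2)
  show "\<exists>N. \<forall>n\<ge>N. (\<Sum>j<n. w j * x j)^2 \<le> (\<Sum>j<n. w j) * (\<Sum>j<n. w j * (x j)^2)"
  proof (intro exI allI impI)
    fix n :: nat
    have "(\<Sum>j<n. w j * x j)^2 = (\<Sum>j<n. sqrt (w j) * (sqrt (w j) * x j))^2"
      using w by (simp add: mult.assoc[symmetric])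
    also have "\<dots> \<le> (\<Sum>j<n. (sqrt (w j))^2) * (\<Sum>j<n. (sqrt (w j) * x j)^2)"
      by (rule Cauchy_Schwarz_ineq_sum)
    also have "\<dots> = (\<Sum>j<n. w j) * (\<Sum>j<n. w j * (x j)^2)"
      using w by (simp add: power_mult_distrib)
    finally show "(\<Sum>j<n. w j * x j)^2 \<le> (\<Sum>j<n. w j) * (\<Sum>j<n. w j * (x j)^2)" .
  qed
qed

lemma shift_sum_le_infsum:
  fixes f :: "int \<Rightarrow> real"
  assumes "f summable_on UNIV" "\<And>k. f k \<ge> 0" "finite F"
  shows "(\<Sum>n\<in>F. f (n - c)) \<le> infsum f UNIV"
proof -
  have "(\<Sum>n\<in>F. f (n - c)) = sum f ((\<lambda>n. n - c) ` F)"
    by (subst sum.reindex) (auto simp: inj_on_def)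
  also have "\<dots> \<le> infsum f UNIV"
    by (rule finite_sum_le_infsum) (use assms in auto)
  finally show ?thesis .
qed

lemma powi_sq: "(r::real) powi (-2 * k) = (r powi (-k))^2"
proof -
  have "r powi (-2 * k) = r powi ((-k) * 2)" by (simp add: mult.commute)
  also have "\<dots> = (r powi (-k)) powi 2" by (rule power_int_mult)
  finally show ?thesis by simp
qed

locale bop_g = bop +
  fixes \<rho> s M :: real
  assumes rho: "\<rho> > 0" and s: "0 < s" "s < \<rho>" and M: "M \<ge> 0"
    and gb: "\<And>n x. norm ((A^^n) x) \<le> M * s^n * norm x"
begin

definition Rop :: "(int \<Rightarrow> 'a) \<Rightarrow> int \<Rightarrow> 'a" where
  "Rop v n = (\<Sum>j. (A^^j) (v (n - 1 - int j)))"

definition q where "q = s / \<rho>"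
lemma q: "0 < q" "q < 1" using rho s by (auto simp: q_def)

definition aw :: "(int \<Rightarrow> 'a) \<Rightarrow> int \<Rightarrow> real" where
  "aw v k = norm (v k) * \<rho> powi (-k)"

lemma aw_nonneg: "aw v k \<ge> 0" using rho by (simp add: aw_def)


lemma aw_sq: "(norm (v k))\<^sup>2 * \<rho> powi (-2 * k) = (aw v k)^2"
  by (simp only: aw_def powi_sq power_mult_distrib)

lemma l2rho_iff: "v \<in> l2rho \<rho> \<longleftrightarrow> (\<lambda>k. (aw v k)^2) summable_on UNIV"
  unfolding l2rho_def by (simp only: aw_sq mem_Collect_eq)

lemma l2rho_norm_aw: "l2rho_norm \<rho> v = sqrt (infsum (\<lambda>k. (aw v k)^2) UNIV)"
  unfolding l2rho_norm_def by (simp only: aw_sq)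

lemma aw_le: assumes "v \<in> l2rho \<rho>" shows "aw v k \<le> l2rho_norm \<rho> v"
proof -
  have "(aw v k)^2 = (\<Sum>i\<in>{k}. (aw v i)^2)" by simp
  also have "\<dots> \<le> infsum (\<lambda>k. (aw v k)^2) UNIV"
    by (rule finite_sum_le_infsum) (use assms in \<open>auto simp: l2rho_iff\<close>)
  finally have "sqrt ((aw v k)^2) \<le> sqrt (infsum (\<lambda>k. (aw v k)^2) UNIV)"
    by (rule real_sqrt_le_mono)
  then show ?thesis using aw_nonneg[of v k] by (simp add: l2rho_norm_aw)
qed

lemma norm_le: fixes v :: "int \<Rightarrow> 'a" assumes "v \<in> l2rho \<rho>" shows "norm (v k) \<le> l2rho_norm \<rho> v * \<rho> powi k"
proof -
  have "norm (v k) = aw v k * \<rho> powi k"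
    using rho by (simp add: aw_def power_int_minus field_simps)
  also have "\<dots> \<le> l2rho_norm \<rho> v * \<rho> powi k"
    using aw_le[OF assms] rho by (intro mult_right_mono) auto
  finally show ?thesis .
qed

lemma term_bound: assumes "v \<in> l2rho \<rho>"
  shows "norm ((A^^j) (v (n - 1 - int j))) \<le> M * l2rho_norm \<rho> v * \<rho> powi (n - 1) * q^j"
proof -
  have "norm ((A^^j) (v (n - 1 - int j))) \<le> M * s^j * norm (v (n - 1 - int j))" by (rule gb)
  also have "\<dots> \<le> M * s^j * (l2rho_norm \<rho> v * \<rho> powi (n - 1 - int j))"
    using norm_le[OF assms] M s by (intro mult_left_mono) auto
  also have "\<rho> powi (n - 1 - int j) = \<rho> powi (n - 1) / \<rho>^j"
    using rho by (simp add: power_int_diff)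
  finally show ?thesis using rho by (simp add: q_def power_divide field_simps)
qed

lemma Rop_summable_norm: assumes "v \<in> l2rho \<rho>"
  shows "summable (\<lambda>j. norm ((A^^j) (v (n - 1 - int j))))"
proof (rule summable_comparison_test')
  show "summable (\<lambda>j. M * l2rho_norm \<rho> v * \<rho> powi (n - 1) * q^j)"
    using q by (intro summable_mult summable_geometric) auto
  show "norm (norm ((A^^j) (v (n - 1 - int j)))) \<le> M * l2rho_norm \<rho> v * \<rho> powi (n - 1) * q^j" for j
    using term_bound[OF assms] by simp
qed

lemma Rop_summable: assumes "v \<in> l2rho \<rho>"
  shows "summable (\<lambda>j. (A^^j) (v (n - 1 - int j)))"
  by (rule summable_norm_cancel[OF Rop_summable_norm[OF assms]])

lemma Rop_T: assumes "v \<in> l2rho \<rho>"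
  shows "shift (Rop v) n - A (Rop v n) = v n"
proof -
  define f where "f j = (A^^j) (v (n - int j))" for j
  have sf: "summable f"
    using Rop_summable[OF assms, of "n + 1"] by (simp add: f_def[abs_def])
  have "shift (Rop v) n = suminf f" by (simp add: shift_def Rop_def f_def[abs_def])
  moreover have "(\<Sum>j. f (Suc j)) = A (Rop v n)"
  proof -
    have "(\<Sum>j. f (Suc j)) = (\<Sum>j. A ((A^^j) (v (n - 1 - int j))))"
      unfolding f_def by (simp add: algebra_simps)
    also have "\<dots> = A (Rop v n)"
      unfolding Rop_def by (rule bounded_linear.suminf[OF bl Rop_summable[OF assms], symmetric])
    finally show ?thesis .
  qed
  ultimately show ?thesis using suminf_split_head[OF sf] by (simp add: f_def)
qed

lemma Rop_T': fixes v :: "int \<Rightarrow> 'a" assumes "v \<in> l2rho \<rho>"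
  shows "Rop (\<lambda>n. shift v n - A (v n)) n = v n"
proof -
  define g where "g j = (A^^j) (v (n - int j))" for j
  have "(\<lambda>j. g j - g (Suc j)) sums (g 0 - 0)"
  proof (rule telescope_sums')
    show "g \<longlonglongrightarrow> 0"
    proof (rule Lim_null_comparison)
      show "\<forall>\<^sub>F j in sequentially. norm (g j) \<le> M * l2rho_norm \<rho> v * \<rho> powi n * q^j"
        using term_bound[OF assms, of _ "n + 1"] by (simp add: g_def)
      show "(\<lambda>j. M * l2rho_norm \<rho> v * \<rho> powi n * q^j) \<longlonglongrightarrow> 0"
        using q by (intro tendsto_mult_right_zero LIMSEQ_power_zero) auto
    qed
  qed
  moreover have "(\<lambda>j. g j - g (Suc j)) = (\<lambda>j. (A^^j) (shift v (n - 1 - int j) - A (v (n - 1 - int j))))"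
    by (rule ext) (simp add: g_def shift_def pow_diff pow_comm algebra_simps)
  ultimately show ?thesis unfolding Rop_def by (simp add: g_def sums_iff)
qed

lemma Rop_add: assumes "v \<in> l2rho \<rho>" "w \<in> l2rho \<rho>"
  shows "Rop (\<lambda>n. v n + w n) = (\<lambda>n. Rop v n + Rop w n)"
  unfolding Rop_def
  by (rule ext) (simp add: pow_add suminf_add[OF Rop_summable[OF assms(1)] Rop_summable[OF assms(2)]])

lemma Rop_scaleC: assumes "v \<in> l2rho \<rho>"
  shows "Rop (\<lambda>n. c *\<^sub>C v n) = (\<lambda>n. c *\<^sub>C Rop v n)"
  unfolding Rop_def
  by (rule ext) (simp add: pow_scaleC bounded_linear.suminf[OF bounded_linear_scaleC Rop_summable[OF assms]])

lemma Rop_l2: fixes v :: "int \<Rightarrow> 'a" assumes v: "v \<in> l2rho \<rho>"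
  shows "Rop v \<in> l2rho \<rho> \<and> l2rho_norm \<rho> (Rop v) \<le> (M / \<rho> * (1 / (1 - q))) * l2rho_norm \<rho> v"
proof -
  define I where "I = infsum (\<lambda>k. (aw v k)^2) UNIV"
  define V where "V = l2rho_norm \<rho> v"
  define Q where "Q = 1 / (1 - q)"
  define L where "L = M / \<rho>"
  have L: "L \<ge> 0" using M rho by (simp add: L_def)
  have sI: "(\<lambda>k. (aw v k)^2) summable_on UNIV" using v by (simp add: l2rho_iff)
  have I0: "I \<ge> 0" unfolding I_def by (rule infsum_nonneg) simp
  have VI: "V = sqrt I" by (simp add: V_def I_def l2rho_norm_aw)
  have Q: "Q > 0" "(\<Sum>j. q^j) = Q" using q by (simp_all add: Q_def suminf_geometric)
  have sq: "summable (\<lambda>j. q^j)" using q by (intro summable_geometric) auto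
  have awV: "aw v k \<le> V" for k unfolding V_def by (rule aw_le[OF v])
  have awI: "(aw v k)^2 \<le> I" for k
  proof -
    have "(aw v k)^2 \<le> V^2" using awV[of k] aw_nonneg[of v k] by (intro power_mono) auto
    then show ?thesis using I0 by (simp add: VI)
  qed
  define c where "c n = (\<Sum>j. q^j * aw v (n - 1 - int j))" for n
  define e where "e n = (\<Sum>j. q^j * (aw v (n - 1 - int j))^2)" for n
  have sc: "summable (\<lambda>j. q^j * aw v (n - 1 - int j))" for n
  proof (rule summable_comparison_test')
    show "summable (\<lambda>j. q^j * V)" by (intro summable_mult2 sq)
    show "norm (q^j * aw v (n - 1 - int j)) \<le> q^j * V" for j
      using q awV aw_nonneg by (simp add: abs_mult mult_left_mono)
  qed
  have se: "summable (\<lambda>j. q^j * (aw v (n - 1 - int j))^2)" for n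
  proof (rule summable_comparison_test')
    show "summable (\<lambda>j. q^j * I)" by (intro summable_mult2 sq)
    show "norm (q^j * (aw v (n - 1 - int j))^2) \<le> q^j * I" for j
      using q awI by (simp add: abs_mult mult_left_mono)
  qed
  have step1: "aw (Rop v) n \<le> L * c n" for n
  proof -
    have tm: "norm ((A^^j) (v (n - 1 - int j))) * \<rho> powi (-n) \<le> L * (q^j * aw v (n - 1 - int j))" for j
    proof -
      define m where "m = n - 1 - int j"
      have pw: "\<rho> powi (-m) = \<rho> powi (-n) * \<rho>^(Suc j)"
      proof -
        have "-m = -n + int (Suc j)" by (simp add: m_def)
        moreover have "\<rho> powi (-n + int (Suc j)) = \<rho> powi (-n) * \<rho> powi (int (Suc j))"
          by (rule power_int_add) (use rho in simp)
        ultimately have "\<rho> powi (-m) = \<rho> powi (-n) * \<rho> powi (int (Suc j))" by simp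
        then show ?thesis by (simp only: power_int_of_nat)
      qed
      have "norm ((A^^j) (v m)) * \<rho> powi (-n) \<le> (M * s^j * norm (v m)) * \<rho> powi (-n)"
        using gb rho by (intro mult_right_mono) auto
      also have "\<dots> = L * (q^j * aw v m)"
        using rho by (simp add: L_def q_def aw_def pw power_divide field_simps)
      finally show ?thesis by (simp add: m_def)
    qed
    have "aw (Rop v) n = norm (Rop v n) * \<rho> powi (-n)" by (simp add: aw_def)
    also have "\<dots> \<le> (\<Sum>j. norm ((A^^j) (v (n - 1 - int j)))) * \<rho> powi (-n)"
      unfolding Rop_def using rho
      by (intro mult_right_mono summable_norm Rop_summable_norm[OF v]) auto
    also have "\<dots> = (\<Sum>j. norm ((A^^j) (v (n - 1 - int j))) * \<rho> powi (-n))"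
      by (rule suminf_mult2[OF Rop_summable_norm[OF v]])
    also have "\<dots> \<le> (\<Sum>j. L * (q^j * aw v (n - 1 - int j)))"
      by (rule suminf_le[OF tm summable_mult2[OF Rop_summable_norm[OF v]] summable_mult[OF sc]])
    also have "\<dots> = L * c n" unfolding c_def by (rule suminf_mult[OF sc])
    finally show ?thesis .
  qed
  have step2: "(c n)^2 \<le> Q * e n" for n
    unfolding c_def e_def Q(2)[symmetric]
    by (rule series_cs[OF _ sq se sc]) (use q in simp)
  have step3: "(aw (Rop v) n)^2 \<le> L^2 * Q * e n" for n
  proof -
    have "(aw (Rop v) n)^2 \<le> (L * c n)^2"
      using step1[of n] aw_nonneg by (intro power_mono) auto
    also have "\<dots> = L^2 * (c n)^2" by (simp add: power_mult_distrib)
    also have "\<dots> \<le> L^2 * (Q * e n)" by (intro mult_left_mono step2) auto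
    finally show ?thesis by (simp add: mult.assoc)
  qed
  have step4: "(\<Sum>n\<in>F. e n) \<le> Q * I" if F: "finite F" for F
  proof -
    have "(\<Sum>n\<in>F. e n) = (\<Sum>j. \<Sum>n\<in>F. q^j * (aw v (n - 1 - int j))^2)"
      unfolding e_def by (rule suminf_sum[symmetric]) (rule se)
    also have "\<dots> \<le> (\<Sum>j. q^j * I)"
    proof (rule suminf_le)
      fix j
      have "(\<Sum>n\<in>F. (aw v (n - (1 + int j)))^2) \<le> I"
        unfolding I_def by (rule shift_sum_le_infsum[OF sI _ F]) simp
      then have "(\<Sum>n\<in>F. (aw v (n - 1 - int j))^2) \<le> I" by (simp add: algebra_simps)
      then show "(\<Sum>n\<in>F. q^j * (aw v (n - 1 - int j))^2) \<le> q^j * I"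
        using q by (simp add: sum_distrib_left[symmetric] mult_left_mono)
      show "summable (\<lambda>j. \<Sum>n\<in>F. q^j * (aw v (n - 1 - int j))^2)" by (intro summable_sum se)
      show "summable (\<lambda>j. q^j * I)" by (intro summable_mult2 sq)
    qed
    also have "\<dots> = Q * I" using suminf_mult2[OF sq, of I] Q by simp
    finally show ?thesis .
  qed
  define B where "B = L^2 * Q * (Q * I)"
  have fin: "(\<Sum>n\<in>F. (aw (Rop v) n)^2) \<le> B" if F: "finite F" for F
  proof -
    have "(\<Sum>n\<in>F. (aw (Rop v) n)^2) \<le> (\<Sum>n\<in>F. L^2 * Q * e n)" by (intro sum_mono step3)
    also have "\<dots> = L^2 * Q * (\<Sum>n\<in>F. e n)" by (simp add: sum_distrib_left)
    also have "\<dots> \<le> B" unfolding B_def using Q by (intro mult_left_mono step4[OF F]) auto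
    finally show ?thesis .
  qed
  have sR: "(\<lambda>n. (aw (Rop v) n)^2) summable_on UNIV"
    by (rule nonneg_bdd_above_summable_on) (auto intro!: bdd_aboveI[of _ B] fin)
  have iR: "infsum (\<lambda>n. (aw (Rop v) n)^2) UNIV \<le> B"
    by (rule infsum_le_finite_sums[OF sR]) (rule fin)
  have "l2rho_norm \<rho> (Rop v) \<le> sqrt B"
    unfolding l2rho_norm_aw using iR by (rule real_sqrt_le_mono)
  also have "sqrt B = L * Q * V"
    using L Q I0 by (simp add: B_def VI real_sqrt_mult power2_eq_square)
  finally show ?thesis using sR by (simp add: l2rho_iff L_def Q_def V_def)
qed

lemma Rop_inverse: "is_l2rho_inverse \<rho> Rop (\<lambda>v n. shift v n - A (v n))"
  unfolding is_l2rho_inverse_def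
proof (intro conjI ballI allI)
  show "Rop v \<in> l2rho \<rho>" if "v \<in> l2rho \<rho>" for v using Rop_l2[OF that] by blast
  show "Rop (\<lambda>n. v n + w n) = (\<lambda>n. Rop v n + Rop w n)" if "v \<in> l2rho \<rho>" "w \<in> l2rho \<rho>" for v w
    by (rule Rop_add[OF that])
  show "Rop (\<lambda>n. c *\<^sub>C v n) = (\<lambda>n. c *\<^sub>C Rop v n)" if "v \<in> l2rho \<rho>" for v c
    by (rule Rop_scaleC[OF that])
  show "\<exists>K. \<forall>v\<in>l2rho \<rho>. l2rho_norm \<rho> (Rop v) \<le> K * l2rho_norm \<rho> v"
    using Rop_l2 by blast
  show "(\<lambda>n. shift (Rop v) n - A (Rop v n)) = v" if "v \<in> l2rho \<rho>" for v
    using Rop_T[OF that] by (intro ext) simp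
  show "Rop (\<lambda>n. shift v n - A (v n)) = v" if "v \<in> l2rho \<rho>" for v
    using Rop_T'[OF that] by (intro ext) simp
qed

lemma delta_l2: "delta_m1 x \<in> l2rho \<rho>"
proof -
  have "(\<lambda>k. (norm (delta_m1 x k))\<^sup>2 * \<rho> powi (-2 * k)) summable_on {-1}" by simp
  then have "(\<lambda>k. (norm (delta_m1 x k))\<^sup>2 * \<rho> powi (-2 * k)) summable_on UNIV"
    by (subst summable_on_cong_neutral[symmetric, where S="{-1}" and f="\<lambda>k. (norm (delta_m1 x k))\<^sup>2 * \<rho> powi (-2 * k)"])
       (auto simp: delta_m1_def)
  then show ?thesis unfolding l2rho_def by simp
qed

lemma Rop_delta: "Rop (delta_m1 x) n = (if n < 0 then 0 else (A^^nat n) x)"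
proof (cases "n < 0")
  case True
  have "(\<lambda>j. (A^^j) (delta_m1 x (n - 1 - int j))) = (\<lambda>j. 0)"
    using True by (intro ext) (auto simp: delta_m1_def)
  then show ?thesis using True by (simp add: Rop_def)
next
  case False
  have "(\<lambda>j. (A^^j) (delta_m1 x (n - 1 - int j))) = (\<lambda>j. if j = nat n then (A^^j) x else 0)"
    using False by (intro ext) (auto simp: delta_m1_def)
  then have "(\<lambda>j. (A^^j) (delta_m1 x (n - 1 - int j))) sums (A^^nat n) x"
    using sums_single[of "nat n" "\<lambda>j. (A^^j) x"] by simp
  then show ?thesis using False by (simp add: Rop_def sums_iff)
qed

end

theorem proposition3p8:
  fixes A :: "'a::{chilbert_space, second_countable_topology} \<Rightarrow> 'a"
    and x :: 'a and u :: "int \<Rightarrow> 'a"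
  assumes "bounded_clinear A"
  defines "i \<equiv> (shift u = (\<lambda>n. A (u n) + delta_m1 x n) \<and> spt u \<subseteq> {0..})"
    and "ii \<equiv> ((\<forall>n::int. n \<ge> 0 \<longrightarrow> u (n + 1) = A (u n)) \<and> u 0 = x \<and> (\<forall>n::int. n < 0 \<longrightarrow> u n = 0))"
    and "iii \<equiv> ((\<forall>n::int. n < 0 \<longrightarrow> u n = 0) \<and> (\<forall>n::int. n \<ge> 0 \<longrightarrow> u n = (A ^^ nat n) x))"
  shows "(i \<longleftrightarrow> ii) \<and> (ii \<longleftrightarrow> iii) \<and>
    (\<forall>\<rho>::real. \<rho> > 0 \<and> \<rho> > spectral_radius A \<longrightarrow>
       (iii \<longleftrightarrow> (shift u = (\<lambda>n. A (u n) + delta_m1 x n) \<and> u \<in> l2rho \<rho>)) \<and>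
       (iii \<longleftrightarrow> (\<exists>R. is_l2rho_inverse \<rho> R (\<lambda>v n. shift v n - A (v n)) \<and>
                      u = R (delta_m1 x) \<and> u \<in> l2rho \<rho>)))"
proof -
  interpret bop A by unfold_locales (rule assms(1))
  have A0: "A 0 = 0" by simp
  have p1: "i \<longleftrightarrow> ii"
  proof
    assume H: i
    have sh: "u (n + 1) = A (u n) + delta_m1 x n" for n
    proof -
      have "shift u n = A (u n) + delta_m1 x n" using H unfolding i_def by simp
      then show ?thesis by (simp add: shift_def)
    qed
    have neg: "u n = 0" if "n < 0" for n
    proof -
      have "n \<notin> spt u" using H that unfolding i_def by auto
      then show ?thesis by (simp add: spt_def)
    qed
    have "u 0 = x" using sh[of "-1"] neg[of "-1"] by (simp add: delta_m1_def)
    moreover have "\<And>n. n \<ge> 0 \<Longrightarrow> u (n + 1) = A (u n)"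
      using sh by (simp add: delta_m1_def)
    ultimately show ii unfolding ii_def using neg by blast
  next
    assume H: ii
    have "shift u = (\<lambda>n. A (u n) + delta_m1 x n)"
    proof (rule ext)
      fix n :: int
      consider "n \<ge> 0" | "n = -1" | "n < -1" by linarith
      then show "shift u n = A (u n) + delta_m1 x n"
      proof cases
        case 1 then show ?thesis using H by (simp add: ii_def shift_def delta_m1_def)
      next
        case 2 then show ?thesis using H by (simp add: ii_def shift_def delta_m1_def)
      next
        case 3 then show ?thesis using H by (simp add: ii_def shift_def delta_m1_def)
      qed
    qed
    moreover have "spt u \<subseteq> {0..}" using H unfolding ii_def spt_def by (auto simp: not_le[symmetric])
    ultimately show i unfolding i_def by blast
  qed
  have p2: "ii \<longleftrightarrow> iii"
  proof
    assume H: ii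
    have "u (int k) = (A^^k) x" for k
    proof (induction k)
      case 0 then show ?case using H by (simp add: ii_def)
    next
      case (Suc k)
      have "u (int (Suc k)) = u (int k + 1)" by (simp add: add.commute)
      also have "\<dots> = A (u (int k))" using H by (simp add: ii_def)
      finally show ?case using Suc by simp
    qed
    then have "\<And>n. n \<ge> 0 \<Longrightarrow> u n = (A^^nat n) x"
      by (metis int_nat_eq)
    then show iii using H unfolding ii_def iii_def by blast
  next
    assume H: iii
    have "u (n + 1) = A (u n)" if "n \<ge> 0" for n
    proof -
      have "nat (n + 1) = Suc (nat n)" using that by simp
      then show ?thesis using H that by (simp add: iii_def)
    qed
    then show ii using H unfolding ii_def iii_def by simp
  qed
  have p3: "(iii \<longleftrightarrow> (shift u = (\<lambda>n. A (u n) + delta_m1 x n) \<and> u \<in> l2rho \<rho>)) \<and>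
       (iii \<longleftrightarrow> (\<exists>R. is_l2rho_inverse \<rho> R (\<lambda>v n. shift v n - A (v n)) \<and>
                      u = R (delta_m1 x) \<and> u \<in> l2rho \<rho>))"
    if rho: "\<rho> > 0" "\<rho> > spectral_radius A" for \<rho>
  proof -
    define t0 where "t0 = max (spectral_radius A) 0"
    define s1 where "s1 = (2 * t0 + \<rho>) / 3"
    define s where "s = (t0 + 2 * \<rho>) / 3"
    have t0: "t0 < \<rho>" "t0 \<ge> 0" "t0 \<ge> spectral_radius A" using rho by (auto simp: t0_def)
    have hs: "s1 > 0" "s1 \<ge> spectral_radius A" "s1 < s" "s < \<rho>" "s > 0"
      using t0 by (auto simp: s1_def s_def)
    interpret bop_r A s1 by unfold_locales (use hs in auto)
    obtain M where M: "M \<ge> 0" "\<And>n x. norm ((A^^n) x) \<le> M * s^n * norm x"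
      using gelfand[OF hs(3)] by blast
    interpret G: bop_g A \<rho> s M by unfold_locales (use rho hs M in auto)
    define T where "T = (\<lambda>(v::int \<Rightarrow> 'a) n. shift v n - A (v n))"
    define u0 where "u0 = G.Rop (delta_m1 x)"
    have dl: "delta_m1 x \<in> l2rho \<rho>" by (rule G.delta_l2)
    have u0l: "u0 \<in> l2rho \<rho>" unfolding u0_def using G.Rop_l2[OF dl] by blast
    have iii_u0: "iii \<longleftrightarrow> u = u0"
    proof
      assume H: iii
      show "u = u0"
      proof (rule ext)
        fix n show "u n = u0 n"
          using H unfolding iii_def u0_def G.Rop_delta by (cases "n < 0") auto
      qed
    next
      assume "u = u0"
      then show iii unfolding iii_def u0_def G.Rop_delta by simp
    qed
    have Tu0: "T u0 = delta_m1 x" unfolding T_def u0_def using G.Rop_T[OF dl] by (intro ext) simp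
    have iv_T: "(shift u = (\<lambda>n. A (u n) + delta_m1 x n)) \<longleftrightarrow> T u = delta_m1 x"
      unfolding T_def fun_eq_iff shift_def diff_eq_eq by (simp add: add.commute)
    have iv: "iii \<longleftrightarrow> (shift u = (\<lambda>n. A (u n) + delta_m1 x n) \<and> u \<in> l2rho \<rho>)"
    proof
      assume iii then show "shift u = (\<lambda>n. A (u n) + delta_m1 x n) \<and> u \<in> l2rho \<rho>"
        using iii_u0 Tu0 u0l iv_T by simp
    next
      assume H: "shift u = (\<lambda>n. A (u n) + delta_m1 x n) \<and> u \<in> l2rho \<rho>"
      then have "T u = delta_m1 x" "u \<in> l2rho \<rho>" using iv_T by auto
      then have "u = G.Rop (delta_m1 x)"
      proof -
        have "G.Rop (T u) = u" unfolding T_def using G.Rop_T'[of u] \<open>u \<in> l2rho \<rho>\<close> by (intro ext) simp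
        then show ?thesis using \<open>T u = delta_m1 x\<close> by simp
      qed
      then show iii using iii_u0 u0_def by simp
    qed
    have v: "iii \<longleftrightarrow> (\<exists>R. is_l2rho_inverse \<rho> R (\<lambda>v n. shift v n - A (v n)) \<and>
                      u = R (delta_m1 x) \<and> u \<in> l2rho \<rho>)"
    proof
      assume iii then show "\<exists>R. is_l2rho_inverse \<rho> R (\<lambda>v n. shift v n - A (v n)) \<and>
                      u = R (delta_m1 x) \<and> u \<in> l2rho \<rho>"
        using iii_u0 u0l G.Rop_inverse unfolding u0_def by blast
    next
      assume "\<exists>R. is_l2rho_inverse \<rho> R (\<lambda>v n. shift v n - A (v n)) \<and>
                      u = R (delta_m1 x) \<and> u \<in> l2rho \<rho>"
      then obtain R where R: "is_l2rho_inverse \<rho> R T" "u = R (delta_m1 x)" "u \<in> l2rho \<rho>"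
        unfolding T_def by blast
      have "T u = delta_m1 x" using R dl unfolding is_l2rho_inverse_def by blast
      then show iii using iv iv_T R(3) by blast
    qed
    show ?thesis using iv v by blast
  qed
  show ?thesis using p1 p2 p3 by blast
qed

end
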